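(* Let $n\ge4$, $x_1,\dots,x_{n-1}>0$, $\gamma,\delta>0$ with $\gamma\ne1\ne\delta$, $x_0=1$, and let $\mathbf{P}$ be the $n\times n$ matrix with entries $p_{ij}=x_{j-1}/x_{i-1}$ except $p_{12}=\delta x_1$, $p_{21}=1/(\delta x_1)$, $p_{13}=\gamma x_2$, $p_{31}=1/(\gamma x_2)$. Let $\mathbf{w}^{EM}$ be the principal right eigenvector of $\mathbf{P}$. If $\gamma,\delta>1$, then $w_1^{EM}/w_i^{EM}>x_{i-1}$ for $i=4,\dots,n$.
   Context: The principal right eigenvector is the positive (Perron) eigenvector belonging to the largest eigenvalue. *)

theory Defs
  imports Complex_Main
begin

text \<open>Square matrices of size n are represented as functions nat => nat => real,
  with indices ranging over 1..n (as in the paper). Vectors are nat => _ with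
  entries indexed by 1..n.\<close>

definition EM_matrix :: "real \<Rightarrow> real \<Rightarrow> (nat \<Rightarrow> real) \<Rightarrow> nat \<Rightarrow> nat \<Rightarrow> real" where
  "EM_matrix \<gamma> \<delta> x i j =
     (if i = 1 \<and> j = 2 then \<delta> * x 1
      else if i = 2 \<and> j = 1 then 1 / (\<delta> * x 1)
      else if i = 1 \<and> j = 3 then \<gamma> * x 2
      else if i = 3 \<and> j = 1 then 1 / (\<gamma> * x 2)
      else x (j - 1) / x (i - 1))"

definition is_eigenvalue :: "nat \<Rightarrow> (nat \<Rightarrow> nat \<Rightarrow> real) \<Rightarrow> complex \<Rightarrow> bool" where
  "is_eigenvalue n A \<mu> \<longleftrightarrow>
     (\<exists>v :: nat \<Rightarrow> complex. (\<exists>i\<in>{1..n}. v i \<noteq> 0) \<and>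
        (\<forall>i\<in>{1..n}. (\<Sum>j=1..n. complex_of_real (A i j) * v j) = \<mu> * v i))"

definition principal_right_eigenvector :: "nat \<Rightarrow> (nat \<Rightarrow> nat \<Rightarrow> real) \<Rightarrow> (nat \<Rightarrow> real) \<Rightarrow> bool" where
  "principal_right_eigenvector n A w \<longleftrightarrow>
     (\<exists>r::real.
        (\<forall>i\<in>{1..n}. w i > 0) \<and>
        (\<forall>i\<in>{1..n}. (\<Sum>j=1..n. A i j * w j) = r * w i) \<and>
        (\<forall>\<mu>. is_eigenvalue n A \<mu> \<longrightarrow> cmod \<mu> \<le> r))"

end

theory Submission
  imports Defs
begin

lemma sum_split3:
  fixes f :: "nat \<Rightarrow> real"
  assumes "n \<ge> 3"
  shows "(\<Sum>j=1..n. f j) = f 1 + f 2 + f 3 + (\<Sum>j=4..n. f j)"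
proof -
  have "(\<Sum>j=1..n. f j) = f 1 + (\<Sum>j=2..n. f j)"
    using assms by (subst sum.atLeast_Suc_atMost) (auto simp: numeral_2_eq_2)
  also have "(\<Sum>j=2..n. f j) = f 2 + (\<Sum>j=3..n. f j)"
    using assms by (subst sum.atLeast_Suc_atMost) (auto simp: eval_nat_numeral)
  also have "(\<Sum>j=3..n. f j) = f 3 + (\<Sum>j=4..n. f j)"
    using assms by (subst sum.atLeast_Suc_atMost) (auto simp: eval_nat_numeral)
  finally show ?thesis by simp
qed

theorem mainTheorem7:
  fixes n :: nat and x :: "nat \<Rightarrow> real" and \<gamma> \<delta> :: real and w :: "nat \<Rightarrow> real"
  assumes "n \<ge> 4"
    and "\<forall>k\<in>{1..n-1}. x k > 0"
    and "x 0 = 1"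
    and "\<gamma> > 0" and "\<delta> > 0" and "\<gamma> \<noteq> 1" and "\<delta> \<noteq> 1"
    and "principal_right_eigenvector n (EM_matrix \<gamma> \<delta> x) w"
    and "\<gamma> > 1" and "\<delta> > 1"
  shows "\<forall>i\<in>{4..n}. w 1 / w i > x (i - 1)"
proof
  fix i assume i: "i \<in> {4..n}"
  obtain r where pos: "\<forall>i\<in>{1..n}. w i > 0"
    and eq: "\<forall>i\<in>{1..n}. (\<Sum>j=1..n. EM_matrix \<gamma> \<delta> x i j * w j) = r * w i"
    using assms(8) unfolding principal_right_eigenvector_def by blast
  define T where "T = (\<Sum>j=1..n. x (j - 1) * w j)"
  have "i - 1 \<in> {1..n-1}" using i by auto
  hence xi: "x (i - 1) > 0" using assms(2) by blast
  have w1: "w 1 > 0" "w 2 > 0" "w 3 > 0" "w i > 0" using pos i assms(1) by auto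
  have x12: "x 1 > 0" "x 2 > 0" using assms(1,2) by auto
  have rowi: "(\<Sum>j=1..n. EM_matrix \<gamma> \<delta> x i j * w j) = T / x (i - 1)"
    unfolding T_def sum_divide_distrib
    by (rule sum.cong) (use i in \<open>auto simp: EM_matrix_def\<close>)
  hence Ti: "T = r * x (i - 1) * w i" using eq i xi by (auto simp: field_simps)
  have row1: "(\<Sum>j=1..n. EM_matrix \<gamma> \<delta> x 1 j * w j)
      = T + (\<delta> - 1) * x 1 * w 2 + (\<gamma> - 1) * x 2 * w 3"
  proof -
    have "(\<Sum>j=1..n. EM_matrix \<gamma> \<delta> x 1 j * w j)
       = w 1 + \<delta> * x 1 * w 2 + \<gamma> * x 2 * w 3 + (\<Sum>j=4..n. x (j - 1) * w j)"
      using assms(1,3)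
      by (subst sum_split3) (auto simp: EM_matrix_def intro!: sum.cong)
    moreover have "T = w 1 + x 1 * w 2 + x 2 * w 3 + (\<Sum>j=4..n. x (j - 1) * w j)"
      unfolding T_def using assms(1,3) by (subst sum_split3) auto
    ultimately show ?thesis by (simp add: algebra_simps)
  qed
  have T1: "r * w 1 = T + (\<delta> - 1) * x 1 * w 2 + (\<gamma> - 1) * x 2 * w 3"
    using eq row1 assms(1) by auto
  have "T > 0" unfolding T_def
  proof (rule sum_pos)
    show "finite {1..n}" by simp
    show "{1..n} \<noteq> {}" using assms(1) by auto
    fix j assume j: "j \<in> {1..n}"
    have "x (j - 1) > 0"
    proof (cases "j = 1")
      case True thus ?thesis using assms(3) by simp
    next
      case False
      hence "j - 1 \<in> {1..n-1}" using j by auto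
      thus ?thesis using assms(2) by blast
    qed
    thus "x (j - 1) * w j > 0" using pos j by simp
  qed
  have e: "(\<delta> - 1) * x 1 * w 2 + (\<gamma> - 1) * x 2 * w 3 > 0"
    using assms(9,10) x12 w1 by (simp add: add_pos_pos)
  have rpos: "r > 0"
  proof -
    have "r * (x (i - 1) * w i) > 0" using Ti \<open>T > 0\<close> by (simp add: mult.assoc)
    have "x (i - 1) * w i > 0" using xi w1(4) by simp
    from zero_less_mult_pos2[OF \<open>r * (x (i - 1) * w i) > 0\<close> this] show ?thesis .
  qed
  have "r * w 1 > r * (x (i - 1) * w i)" using T1 Ti e by (simp only: mult.assoc)
  hence "w 1 > x (i - 1) * w i" using rpos by (simp only: mult_less_cancel_left_pos)
  thus "w 1 / w i > x (i - 1)" using w1(4) by (simp only: pos_less_divide_eq)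
qed

end
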